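(* Let $G$ be a strongly connected signed digraph on $[n]$ with at least one arc and without positive cycles, and let $f$ be a Boolean network on $G$. For every $i\in[n]$ and every $x\in\{0,1\}^n$ there is a word $w$ over $[n]$ such that $f^w(x)_i\neq x_i$.
   Context: A signed digraph on $V$ is $(V,E)$ with $E\subseteq V\times V\times\{-1,1\}$ (arc from $j$ to $i$ of sign $s$; loops allowed). Cycles have no repeated vertices (a loop is a cycle); the sign of a cycle is the product of its arc signs. A Boolean network (BN) is a map $f:\{0,1\}^V\to\{0,1\}^V$; its signed interaction digraph has a positive (negative) arc from $j$ to $i$ iff for some $x$ with $x_j=0$, $f_i(x+e_j)-f_i(x)$ is positive (negative), $x+e_j$ denoting $x$ with component $j$ flipped. A BN on $G$ is one whose signed interaction digraph is $G$. $f^i(x)$ is $x$ with $x_i$ replaced by $f_i(x)$; for a word $w=i_1\cdots i_\ell$, $f^w=f^{i_\ell}\circ\cdots\circ f^{i_1}$. *)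

theory Defs
  imports Main
begin

text \<open>Vertices: a finite type 'v (standing for [n]).  Configurations: 'v \<Rightarrow> bool
  (True = 1, False = 0).  A signed arc (j, i, s) goes from j to i with sign s.\<close>

type_synonym 'v sdigraph = "('v \<times> 'v \<times> int) set"

definition signed_digraph :: "'v sdigraph \<Rightarrow> bool" where
  "signed_digraph E \<longleftrightarrow> (\<forall>(j, i, s) \<in> E. s \<in> {-1, 1})"

definition interaction_graph :: "(('v \<Rightarrow> bool) \<Rightarrow> ('v \<Rightarrow> bool)) \<Rightarrow> 'v sdigraph" where
  "interaction_graph f =
     {(j, i, s). (s = 1 \<and> (\<exists>x. \<not> x j \<and> \<not> f x i \<and> f (x(j := True)) i))
               \<or> (s = -1 \<and> (\<exists>x. \<not> x j \<and> f x i \<and> \<not> f (x(j := True)) i))}"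

definition arc_rel :: "'v sdigraph \<Rightarrow> ('v \<times> 'v) set" where
  "arc_rel E = {(j, i). \<exists>s. (j, i, s) \<in> E}"

definition strongly_connected :: "'v sdigraph \<Rightarrow> bool" where
  "strongly_connected E \<longleftrightarrow> (\<forall>u v. (u, v) \<in> (arc_rel E)\<^sup>*)"

definition is_cycle :: "'v sdigraph \<Rightarrow> ('v \<times> 'v \<times> int) list \<Rightarrow> bool" where
  "is_cycle E c \<longleftrightarrow> c \<noteq> [] \<and> set c \<subseteq> E
     \<and> (\<forall>t < length c. fst (snd (c ! t)) = fst (c ! ((t + 1) mod length c)))
     \<and> distinct (map fst c)"

definition cycle_sign :: "('v \<times> 'v \<times> int) list \<Rightarrow> int" where
  "cycle_sign c = prod_list (map (\<lambda>a. snd (snd a)) c)"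

definition no_positive_cycle :: "'v sdigraph \<Rightarrow> bool" where
  "no_positive_cycle E \<longleftrightarrow> \<not> (\<exists>c. is_cycle E c \<and> cycle_sign c = 1)"

definition upd_at :: "(('v \<Rightarrow> bool) \<Rightarrow> ('v \<Rightarrow> bool)) \<Rightarrow> 'v \<Rightarrow> ('v \<Rightarrow> bool) \<Rightarrow> ('v \<Rightarrow> bool)" where
  "upd_at f i x = x(i := f x i)"

fun upd_word :: "(('v \<Rightarrow> bool) \<Rightarrow> ('v \<Rightarrow> bool)) \<Rightarrow> 'v list \<Rightarrow> ('v \<Rightarrow> bool) \<Rightarrow> ('v \<Rightarrow> bool)" where
  "upd_word f [] x = x"
| "upd_word f (i # w) x = upd_word f w (upd_at f i x)"

end

theory Submission
  imports Defs
begin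

lemma ig_pos: "\<not> x k \<Longrightarrow> \<not> f x v \<Longrightarrow> f (x(k := True)) v \<Longrightarrow> (k, v, 1) \<in> interaction_graph f"
  unfolding interaction_graph_def by auto

lemma ig_neg: "\<not> x k \<Longrightarrow> f x v \<Longrightarrow> \<not> f (x(k := True)) v \<Longrightarrow> (k, v, -1) \<in> interaction_graph f"
  unfolding interaction_graph_def by auto

lemma ig_sign: "(k, v, s) \<in> interaction_graph f \<Longrightarrow> s = 1 \<or> s = -1"
  unfolding interaction_graph_def by auto

lemma ig_wit: "(k, v, s) \<in> interaction_graph f \<Longrightarrow> \<exists>x. f x v \<noteq> f (x(k := True)) v"
  unfolding interaction_graph_def by auto

lemma two_point:
  fixes f :: "('v::finite \<Rightarrow> bool) \<Rightarrow> ('v \<Rightarrow> bool)"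
  assumes "f y v \<noteq> f z v"
  shows "\<exists>k s. y k \<noteq> z k \<and> (k, v, s) \<in> interaction_graph f \<and> (s = 1 \<longleftrightarrow> y k = f y v)"
  using assms
proof (induction "card {k. y k \<noteq> z k}" arbitrary: y rule: less_induct)
  case (less y)
  have "y \<noteq> z" using less.prems by auto
  then obtain k where k: "y k \<noteq> z k" by auto
  define y' where "y' = y(k := z k)"
  show ?case
  proof (cases "f y' v = f y v")
    case True
    have sub: "{j. y' j \<noteq> z j} = {j. y j \<noteq> z j} - {k}" by (auto simp: y'_def)
    have c1: "card {j. y' j \<noteq> z j} < card {j. y j \<noteq> z j}"
      unfolding sub using k by (intro card_Diff1_less) auto
    have c2: "f y' v \<noteq> f z v" using True less.prems by simp
    obtain j s where j: "y' j \<noteq> z j" "(j, v, s) \<in> interaction_graph f"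
        "s = 1 \<longleftrightarrow> y' j = f y' v"
      using less.hyps[OF c1 c2] by blast
    have "j \<noteq> k" using j(1) by (auto simp: y'_def)
    hence "y' j = y j" by (simp add: y'_def)
    thus ?thesis using j True by metis
  next
    case False
    show ?thesis
    proof (cases "y k")
      case yk: False
      hence zk: "z k" using k by simp
      have y'eq: "y' = y(k := True)" using zk by (simp add: y'_def)
      show ?thesis
      proof (cases "f y v")
        case True
        then have "(k, v, -1) \<in> interaction_graph f"
          using yk False y'eq by (intro ig_neg) auto
        then show ?thesis using k yk True by fastforce
      next
        case fF: False
        then have "(k, v, 1) \<in> interaction_graph f"
          using yk False y'eq by (intro ig_pos) auto
        then show ?thesis using k yk fF by fastforce
      qed
    next
      case yk: True
      hence zk: "\<not> z k" using k by simp
      have y'eq: "y' = y(k := False)" using zk by (simp add: y'_def)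
      have bk: "y'(k := True) = y" using yk by (auto simp: y'eq fun_upd_idem)
      have y'k: "\<not> y' k" by (simp add: y'eq)
      show ?thesis
      proof (cases "f y v")
        case True
        then have "(k, v, 1) \<in> interaction_graph f"
          using y'k False bk by (intro ig_pos[of y']) auto
        then show ?thesis using k yk True by fastforce
      next
        case fF: False
        then have "(k, v, -1) \<in> interaction_graph f"
          using y'k False bk by (intro ig_neg[of y']) auto
        then show ?thesis using k yk fF by fastforce
      qed
    qed
  qed
qed

lemma in_arc:
  assumes "strongly_connected G" "G \<noteq> {}"
  shows "\<exists>u s. (u, v, s) \<in> G"
proof -
  obtain a b s where ab: "(a, b, s) \<in> G" using assms(2) by auto
  have "(b, v) \<in> (arc_rel G)\<^sup>*" using assms(1) by (simp add: strongly_connected_def)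
  then show ?thesis
  proof (cases rule: rtranclE)
    case base then show ?thesis using ab by auto
  next
    case (step u) then show ?thesis by (auto simp: arc_rel_def)
  qed
qed

lemma fire:
  fixes f :: "('v::finite \<Rightarrow> bool) \<Rightarrow> ('v \<Rightarrow> bool)"
  assumes "\<exists>u s. (u, v, s) \<in> interaction_graph f"
    and "\<forall>u s. (u, v, s) \<in> interaction_graph f \<longrightarrow> \<not> (s = 1 \<longleftrightarrow> y u = y v)"
  shows "f y v \<noteq> y v"
proof
  assume eq: "f y v = y v"
  obtain u s where us: "(u, v, s) \<in> interaction_graph f" using assms(1) by blast
  obtain x where x: "f x v \<noteq> f (x(u := True)) v" using ig_wit[OF us] by blast
  have "\<exists>z. f z v \<noteq> f y v"
  proof (cases "f x v = f y v")
    case True then show ?thesis using x by (intro exI[of _ "x(u := True)"]) simp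
  next
    case False then show ?thesis by (intro exI[of _ x])
  qed
  then obtain z where z: "f z v \<noteq> f y v" by blast
  then have "f y v \<noteq> f z v" by simp
  from two_point[of f y v z, OF this] obtain k s' where
    ks: "(k, v, s') \<in> interaction_graph f" "s' = 1 \<longleftrightarrow> y k = f y v" by blast
  have "\<not> (s' = 1 \<longleftrightarrow> y k = y v)" using assms(2) ks(1) by blast
  then show False using ks(2) eq by simp
qed


lemma prod_list_upt: "prod_list (map g [0..<n]) = (\<Prod>t<n. g t)"
  by (induction n) (auto simp: lessThan_Suc mult.commute)

lemma prod_shift_aux: "(\<Prod>m<n. h (Suc m)) * h 0 = (\<Prod>m<n. h m) * (h n :: int)"
  by (induction n) (auto simp: lessThan_Suc mult_ac)

lemma exists_source:
  fixes f :: "('v::finite \<Rightarrow> bool) \<Rightarrow> ('v \<Rightarrow> bool)" and y :: "'v \<Rightarrow> bool"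
  assumes npc: "no_positive_cycle (interaction_graph f)"
  shows "\<exists>v. \<forall>u s. (u, v, s) \<in> interaction_graph f \<longrightarrow> \<not> (s = 1 \<longleftrightarrow> y u = y v)"
proof (rule ccontr)
  let ?G = "interaction_graph f"
  assume "\<not> ?thesis"
  then have "\<forall>v. \<exists>u s. (u, v, s) \<in> ?G \<and> (s = 1 \<longleftrightarrow> y u = y v)" by blast
  then obtain q sg where qs: "\<And>v. (q v, v, sg v) \<in> ?G \<and> (sg v = 1 \<longleftrightarrow> y (q v) = y v)"
    by metis
  define \<sigma> where "\<sigma> u = (if y u then 1 else -1 :: int)" for u
  have sg\<sigma>: "sg v = \<sigma> (q v) * \<sigma> v" for v
    using qs[of v] ig_sign[of "q v" v "sg v" f] by (auto simp: \<sigma>_def)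
  have \<sigma>sq: "\<sigma> u * \<sigma> u = 1" for u by (simp add: \<sigma>_def)
  define N where "N = card (UNIV :: 'v set)"
  define F where "F m = (q ^^ m) undefined" for m
  have "\<not> inj_on F {..N}"
  proof
    assume "inj_on F {..N}"
    hence "card (F ` {..N}) = Suc N" by (simp add: card_image)
    moreover have "card (F ` {..N}) \<le> N" unfolding N_def by (rule card_mono) auto
    ultimately show False by simp
  qed
  then obtain a b where ab: "a \<noteq> b" "F a = F b" unfolding inj_on_def by auto
  obtain a b where ab2: "a < b" "F a = F b"
    using ab by (cases "a < b") (auto, metis linorder_neqE_nat)
  define z where "z = F a"
  have per: "(q ^^ (b - a)) z = z"
  proof -
    have "(q ^^ (b - a)) z = (q ^^ (b - a + a)) undefined"
      by (simp add: z_def F_def funpow_add)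
    also have "b - a + a = b" using ab2 by simp
    finally show ?thesis using ab2 by (simp add: z_def F_def)
  qed
  define L where "L = (LEAST L. 0 < L \<and> (q ^^ L) z = z)"
  have L: "0 < L \<and> (q ^^ L) z = z"
    unfolding L_def by (rule LeastI[of _ "b - a"]) (use per ab2 in auto)
  have inj: "m = m'" if "m < L" "m' < L" "(q ^^ m) z = (q ^^ m') z" for m m'
  proof (rule ccontr)
    assume ne: "m \<noteq> m'"
    have key: "(q ^^ (L - m2 + m1)) z = z" if "m1 < m2" "m2 < L" "(q ^^ m1) z = (q ^^ m2) z" for m1 m2
    proof -
      have "(q ^^ (L - m2 + m1)) z = (q ^^ (L - m2)) ((q ^^ m1) z)" by (simp add: funpow_add)
      also have "\<dots> = (q ^^ (L - m2)) ((q ^^ m2) z)" using that by simp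
      also have "\<dots> = (q ^^ (L - m2 + m2)) z" by (simp add: funpow_add)
      also have "L - m2 + m2 = L" using that by simp
      finally show ?thesis using L by simp
    qed
    have "\<exists>m1 m2. m1 < m2 \<and> m2 < L \<and> (q ^^ m1) z = (q ^^ m2) z"
      using ne that by (metis linorder_neqE_nat)
    then obtain m1 m2 where mm: "m1 < m2" "m2 < L" "(q ^^ m1) z = (q ^^ m2) z" by blast
    have "0 < L - m2 + m1 \<and> (q ^^ (L - m2 + m1)) z = z" using key[OF mm] mm by simp
    hence "L \<le> L - m2 + m1" unfolding L_def by (rule Least_le)
    then show False using mm by simp
  qed
  define h where "h t = (q ^^ (L - Suc t)) z" for t
  have qh: "q (h t) = (q ^^ (L - t)) z" if "t < L" for t
  proof -
    have "L - t = Suc (L - Suc t)" using that by simp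
    then show ?thesis by (simp add: h_def)
  qed
  define c where "c = map (\<lambda>t. (q (h t), h t, sg (h t))) [0..<L]"
  have len: "length c = L" by (simp add: c_def)
  have cyc: "is_cycle ?G c"
    unfolding is_cycle_def
  proof (intro conjI allI impI)
    show "c \<noteq> []" using L by (simp add: c_def)
    show "set c \<subseteq> ?G" using qs by (auto simp: c_def)
  next
    fix t assume t: "t < length c"
    hence tL: "t < L" by (simp add: len)
    show "fst (snd (c ! t)) = fst (c ! ((t + 1) mod length c))"
    proof (cases "t + 1 < L")
      case True
      have "fst (c ! ((t + 1) mod length c)) = q (h (t + 1))"
        using True by (simp add: len c_def)
      also have "\<dots> = (q ^^ (L - (t + 1))) z" using qh True by simp
      also have "\<dots> = h t" by (simp add: h_def)
      finally show ?thesis using tL by (simp add: c_def)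
    next
      case False
      hence tt: "t + 1 = L" using tL by simp
      have "fst (c ! ((t + 1) mod length c)) = q (h 0)"
        using tt L by (simp add: len c_def)
      also have "\<dots> = z" using qh[of 0] L by simp
      also have "h t = z" using tt by (simp add: h_def)
      ultimately show ?thesis using tL by (simp add: c_def)
    qed
  next
    show "distinct (map fst c)"
    proof -
      have "map fst c = map (\<lambda>t. q (h t)) [0..<L]" by (simp add: c_def)
      moreover have "inj_on (\<lambda>t. q (h t)) {0..<L}"
      proof (rule inj_onI)
        fix t t' assume tt: "t \<in> {0..<L}" "t' \<in> {0..<L}" "q (h t) = q (h t')"
        have e: "q (h s) = (q ^^ ((L - s) mod L)) z" if "s < L" for s
        proof (cases "s = 0")
          case True then show ?thesis using qh[of 0] L by simp
        next
          case False then show ?thesis using qh[of s] that by simp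
        qed
        have "(L - t) mod L = (L - t') mod L"
          using tt e[of t] e[of t'] inj[of "(L - t) mod L" "(L - t') mod L"] L by auto
        then show "t = t'" using tt
          by (cases "t = 0"; cases "t' = 0") auto
      qed
      ultimately show ?thesis by (simp add: distinct_map)
    qed
  qed
  have "cycle_sign c = (\<Prod>t<L. sg (h t))"
    by (simp add: cycle_sign_def c_def comp_def prod_list_upt)
  also have "\<dots> = (\<Prod>t<L. \<sigma> (q (h t)) * \<sigma> (h t))" by (simp add: sg\<sigma>)
  also have "\<dots> = (\<Prod>t<L. \<sigma> (q (h t))) * (\<Prod>t<L. \<sigma> (h t))" by (rule prod.distrib)
  also have "(\<Prod>t<L. \<sigma> (h t)) = (\<Prod>m<L. \<sigma> ((q ^^ m) z))"
    unfolding h_def by (rule prod.nat_diff_reindex)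
  also have "(\<Prod>t<L. \<sigma> (q (h t))) = (\<Prod>t<L. \<sigma> ((q ^^ Suc (L - Suc t)) z))"
    by (rule prod.cong) (auto simp: h_def)
  also have "\<dots> = (\<Prod>m<L. \<sigma> ((q ^^ Suc m) z))"
    by (rule prod.nat_diff_reindex)
  also have "\<dots> = (\<Prod>m<L. \<sigma> ((q ^^ m) z))"
  proof -
    have "(\<Prod>m<L. \<sigma> ((q ^^ Suc m) z)) * \<sigma> ((q ^^ 0) z) = (\<Prod>m<L. \<sigma> ((q ^^ m) z)) * \<sigma> ((q ^^ L) z)"
      by (rule prod_shift_aux)
    moreover have "\<sigma> ((q ^^ L) z) = \<sigma> ((q ^^ 0) z)" using L by simp
    moreover have "\<sigma> ((q ^^ 0) z) \<noteq> 0" by (simp add: \<sigma>_def)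
    ultimately show ?thesis by simp
  qed
  also have "(\<Prod>m<L. \<sigma> ((q ^^ m) z)) * (\<Prod>m<L. \<sigma> ((q ^^ m) z)) = (\<Prod>m<L. \<sigma> ((q ^^ m) z) * \<sigma> ((q ^^ m) z))"
    by (rule prod.distrib[symmetric])
  also have "\<dots> = 1" by (simp add: \<sigma>sq)
  finally have "cycle_sign c = 1" .
  with cyc npc show False unfolding no_positive_cycle_def by blast
qed


theorem lemma1:
  fixes G :: "('v::finite) sdigraph"
    and f :: "('v \<Rightarrow> bool) \<Rightarrow> ('v \<Rightarrow> bool)"
  assumes "signed_digraph G"
    and "strongly_connected G"
    and "G \<noteq> {}"
    and "no_positive_cycle G"
    and "interaction_graph f = G"
  shows "\<forall>i x. \<exists>w. upd_word f w x i \<noteq> x i"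
proof (intro allI)
  fix i :: 'v and x :: "'v \<Rightarrow> bool"
  let ?R = "arc_rel G"
  have inarc: "\<exists>u s. (u, v, s) \<in> interaction_graph f" for v
    using in_arc[OF assms(2,3)] assms(5) by simp
  have npc: "no_positive_cycle (interaction_graph f)" using assms(4,5) by simp
  define d where "d v = (LEAST k. (i, v) \<in> ?R ^^ k)" for v
  have dex: "\<exists>k. (i, v) \<in> ?R ^^ k" for v
    using assms(2) by (simp add: strongly_connected_def rtrancl_power[symmetric])
  have par: "\<exists>u. (u, v) \<in> ?R \<and> d u < d v" if "v \<noteq> i" for v
  proof -
    have iv: "(i, v) \<in> ?R ^^ d v" unfolding d_def by (rule LeastI_ex) (rule dex)
    have "d v \<noteq> 0" proof assume "d v = 0" then show False using iv that by simp qed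
    then obtain m where m: "d v = Suc m" by (cases "d v") auto
    with iv obtain u where u: "(i, u) \<in> ?R ^^ m" "(u, v) \<in> ?R" by auto
    have "d u \<le> m" unfolding d_def using u(1) by (rule Least_le)
    then show ?thesis using u m by auto
  qed
  define p where "p v = (SOME u. (u, v) \<in> ?R \<and> d u < d v)" for v
  have p: "(p v, v) \<in> ?R \<and> d (p v) < d v" if "v \<noteq> i" for v
    unfolding p_def using par[OF that] by (rule someI_ex)
  define N where "N = card (UNIV :: 'v set)"
  have N0: "0 < N" unfolding N_def by (simp add: finite_UNIV_card_ge_0)
  define M where "M = Suc (Max (range d))"
  have dM: "d v < M" for v unfolding M_def by (simp add: le_imp_less_Suc)
  define wt where "wt v = N ^ (M - d v)" for v
  define cons where "cons y u w \<longleftrightarrow> (\<exists>s. (u, w, s) \<in> G \<and> (s = 1 \<longleftrightarrow> y u = y w))"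
    for y :: "'v \<Rightarrow> bool" and u w
  define tm where "tm y w = (if w \<noteq> i \<and> \<not> cons y (p w) w then wt w else 0)" for y w
  define \<Phi> where "\<Phi> y = (\<Sum>w\<in>UNIV. tm y w)" for y
  have decr: "\<Phi> (y(v := \<not> y v)) < \<Phi> y"
    if vi: "v \<noteq> i" and src: "\<forall>u s. (u, v, s) \<in> G \<longrightarrow> \<not> (s = 1 \<longleftrightarrow> y u = y v)" for y v
  proof -
    define y' where "y' = y(v := \<not> y v)"
    define B where "B = N ^ (M - Suc (d v))"
    have pv: "(p v, v) \<in> ?R" "p v \<noteq> v" using p[OF vi] by auto
    have t1: "tm y v = wt v" using vi src by (auto simp: tm_def cons_def)
    have t2: "tm y' v = 0"
    proof -
      obtain s where s: "(p v, v, s) \<in> G" using pv(1) by (auto simp: arc_rel_def)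
      then have "\<not> (s = 1 \<longleftrightarrow> y (p v) = y v)" using src by blast
      then have "cons y' (p v) v" using s pv(2) by (auto simp: cons_def y'_def)
      then show ?thesis by (simp add: tm_def)
    qed
    define ex where "ex w = (if w \<noteq> i \<and> p w = v then wt w else 0)" for w
    have t3: "tm y' w \<le> tm y w + ex w" if "w \<noteq> v" for w
    proof (cases "p w = v")
      case True then show ?thesis by (simp add: tm_def ex_def)
    next
      case False
      have "cons y' (p w) w = cons y (p w) w" using False that by (simp add: cons_def y'_def)
      then show ?thesis by (simp add: tm_def ex_def)
    qed
    have exB: "ex w \<le> B" for w
    proof (cases "w \<noteq> i \<and> p w = v")
      case True
      then have "d v < d w" using p[of w] by auto
      then have "M - d w \<le> M - Suc (d v)" by simp
      then have "wt w \<le> B" unfolding wt_def B_def using N0 by (intro power_increasing) auto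
      then show ?thesis using True by (simp add: ex_def)
    qed (auto simp: ex_def)
    have "(\<Sum>w\<in>UNIV - {v}. ex w) \<le> card (UNIV - {v}) * B"
      using sum_bounded_above[of "UNIV - {v}" ex B] exB by simp
    also have "card (UNIV - {v}) = N - 1" by (simp add: N_def card_Diff_singleton)
    finally have sumex: "(\<Sum>w\<in>UNIV - {v}. ex w) \<le> (N - 1) * B" .
    have wtv: "wt v = N * B"
    proof -
      have "M - d v = Suc (M - Suc (d v))" using dM[of v] by simp
      then show ?thesis by (simp add: wt_def B_def)
    qed
    have Bpos: "0 < B" using N0 by (simp add: B_def)
    have "\<Phi> y' = tm y' v + (\<Sum>w\<in>UNIV - {v}. tm y' w)"
      unfolding \<Phi>_def by (rule sum.remove) auto
    also have "\<dots> \<le> 0 + (\<Sum>w\<in>UNIV - {v}. tm y w + ex w)"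
      using t2 t3 by (auto intro: sum_mono)
    also have "\<dots> = (\<Sum>w\<in>UNIV - {v}. tm y w) + (\<Sum>w\<in>UNIV - {v}. ex w)"
      by (simp add: sum.distrib)
    also have "\<dots> \<le> (\<Sum>w\<in>UNIV - {v}. tm y w) + (N - 1) * B" using sumex by simp
    also have "\<dots> < (\<Sum>w\<in>UNIV - {v}. tm y w) + wt v"
      using wtv Bpos N0 by (simp add: diff_mult_distrib)
    also have "\<dots> = \<Phi> y"
      unfolding \<Phi>_def using t1 by (subst sum.remove[of UNIV v]) auto
    finally show ?thesis by (simp add: y'_def)
  qed
  have main: "\<exists>w. upd_word f w y i \<noteq> y i" for y
  proof (induction "\<Phi> y" arbitrary: y rule: less_induct)
    case (less y)
    show ?case
    proof (cases "f y i = y i")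
      case False
      then have "upd_word f [i] y i \<noteq> y i" by (simp add: upd_at_def)
      then show ?thesis by blast
    next
      case True
      obtain v where v: "\<forall>u s. (u, v, s) \<in> interaction_graph f \<longrightarrow> \<not> (s = 1 \<longleftrightarrow> y u = y v)"
        using exists_source[OF npc] by blast
      have fv: "f y v \<noteq> y v" by (rule fire[OF inarc v])
      have vi: "v \<noteq> i" using fv True by auto
      have upd: "upd_at f v y = y(v := \<not> y v)" using fv by (auto simp: upd_at_def)
      have "\<Phi> (upd_at f v y) < \<Phi> y" unfolding upd using decr vi v assms(5) by simp
      then obtain w where "upd_word f w (upd_at f v y) i \<noteq> upd_at f v y i" using less by blast
      then have "upd_word f (v # w) y i \<noteq> y i" using vi by (simp add: upd_at_def)
      then show ?thesis by blast
    qed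
  qed
  show "\<exists>w. upd_word f w x i \<noteq> x i" by (rule main)
qed

end
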